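(* Let $\mathcal{L},\mathcal{M}$ be matroids with $E(\mathcal{L})\cap E(\mathcal{M})=\{g\}$, $g$ neither a loop nor a coloop in either, and $\mathcal{N}=\mathcal{L}\oplus_g\mathcal{M}$. (a) With $N=Z(\mathbf{B}\mathcal{N};\mathbf{y})$, $L=Z(\mathbf{B}\mathcal{L};\mathbf{y})$, $M=Z(\mathbf{B}\mathcal{M};\mathbf{y})$: $N=L^gM_g+L_gM^g$. (b) With $N=Z(\mathbf{I}\mathcal{N};\mathbf{y})$, $L=Z(\mathbf{I}\mathcal{L};\mathbf{y})$, $M=Z(\mathbf{I}\mathcal{M};\mathbf{y})$: $N=L^gM_g+L_gM^g-L_gM_g$. (c) With $N=Z(\mathbf{S}\mathcal{N};\mathbf{y})$, $L=Z(\mathbf{S}\mathcal{L};\mathbf{y})$, $M=Z(\mathbf{S}\mathcal{M};\mathbf{y})$: $N=L^gM_g+L_gM^g-L^gM^g$.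
   Context: For a family $\mathcal{Q}$ of subsets of a finite set, $Z(\mathcal{Q};\mathbf{y})=\sum_{S\in\mathcal{Q}}\prod_{e\in S}y_e$; $\mathbf{B}\mathcal{M},\mathbf{I}\mathcal{M},\mathbf{S}\mathcal{M}$ are the sets of bases, independent sets and spanning sets of $\mathcal{M}$. For such a polynomial $P$, $P^g=P|_{y_g=0}$ and $P_g=\partial P/\partial y_g$. Two-sum: $\mathcal{N}$ is the matroid on $E(\mathcal{L})\cup E(\mathcal{M})\setminus\{g\}$ with $\mathrm{rank}_{\mathcal{N}}(S)=\mathrm{rank}_{\mathcal{L}}(S\cap E(\mathcal{L}))+\mathrm{rank}_{\mathcal{M}}(S\cap E(\mathcal{M}))-\nu(S)$, where $\nu(S)=1$ if $g$ is in the $\mathcal{L}$-closure of $S\cap E(\mathcal{L})$ and in the $\mathcal{M}$-closure of $S\cap E(\mathcal{M})$, and $\nu(S)=0$ otherwise. *)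

theory Defs
  imports "HOL-Analysis.Analysis"
begin

definition matroid :: "'a set \<Rightarrow> ('a set \<Rightarrow> bool) \<Rightarrow> bool" where
  "matroid E I \<longleftrightarrow> finite E \<and> (\<forall>X. I X \<longrightarrow> X \<subseteq> E) \<and> I {} \<and>
     (\<forall>X Y. I Y \<and> X \<subseteq> Y \<longrightarrow> I X) \<and>
     (\<forall>X Y. I X \<and> I Y \<and> card X < card Y \<longrightarrow> (\<exists>e\<in>Y - X. I (insert e X)))"

definition mrank :: "('a set \<Rightarrow> bool) \<Rightarrow> 'a set \<Rightarrow> nat" where
  "mrank I X = Max {card Y | Y. Y \<subseteq> X \<and> I Y}"

definition mclosure :: "'a set \<Rightarrow> ('a set \<Rightarrow> bool) \<Rightarrow> 'a set \<Rightarrow> 'a set" where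
  "mclosure E I X = {e \<in> E. mrank I (insert e X) = mrank I X}"

definition indeps :: "'a set \<Rightarrow> ('a set \<Rightarrow> bool) \<Rightarrow> 'a set set" where
  "indeps E I = {X. X \<subseteq> E \<and> I X}"

definition bases :: "'a set \<Rightarrow> ('a set \<Rightarrow> bool) \<Rightarrow> 'a set set" where
  "bases E I = {B. B \<subseteq> E \<and> I B \<and> (\<forall>X. X \<subseteq> E \<and> I X \<and> B \<subseteq> X \<longrightarrow> X = B)}"

definition spanning :: "'a set \<Rightarrow> ('a set \<Rightarrow> bool) \<Rightarrow> 'a set set" where
  "spanning E I = {S. S \<subseteq> E \<and> mrank I S = mrank I E}"

definition is_loop :: "('a set \<Rightarrow> bool) \<Rightarrow> 'a \<Rightarrow> bool" where
  "is_loop I g \<longleftrightarrow> \<not> I {g}"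

definition is_coloop :: "'a set \<Rightarrow> ('a set \<Rightarrow> bool) \<Rightarrow> 'a \<Rightarrow> bool" where
  "is_coloop E I g \<longleftrightarrow> (\<forall>B\<in>bases E I. g \<in> B)"

text \<open>Two-sum N = L (+)_g M, described by its ground set and rank function.\<close>
definition tsum_ground :: "'a set \<Rightarrow> 'a set \<Rightarrow> 'a \<Rightarrow> 'a set" where
  "tsum_ground EL EM g = (EL \<union> EM) - {g}"

definition tsum_nu :: "'a set \<Rightarrow> ('a set \<Rightarrow> bool) \<Rightarrow> 'a set \<Rightarrow> ('a set \<Rightarrow> bool) \<Rightarrow> 'a \<Rightarrow> 'a set \<Rightarrow> nat" where
  "tsum_nu EL IL EM IM g S =
     (if g \<in> mclosure EL IL (S \<inter> EL) \<and> g \<in> mclosure EM IM (S \<inter> EM) then 1 else 0)"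

definition tsum_rank :: "'a set \<Rightarrow> ('a set \<Rightarrow> bool) \<Rightarrow> 'a set \<Rightarrow> ('a set \<Rightarrow> bool) \<Rightarrow> 'a \<Rightarrow> 'a set \<Rightarrow> nat" where
  "tsum_rank EL IL EM IM g S =
     mrank IL (S \<inter> EL) + mrank IM (S \<inter> EM) - tsum_nu EL IL EM IM g S"

definition tsum_indeps :: "'a set \<Rightarrow> ('a set \<Rightarrow> bool) \<Rightarrow> 'a set \<Rightarrow> ('a set \<Rightarrow> bool) \<Rightarrow> 'a \<Rightarrow> 'a set set" where
  "tsum_indeps EL IL EM IM g =
     {S. S \<subseteq> tsum_ground EL EM g \<and> tsum_rank EL IL EM IM g S = card S}"

definition tsum_bases :: "'a set \<Rightarrow> ('a set \<Rightarrow> bool) \<Rightarrow> 'a set \<Rightarrow> ('a set \<Rightarrow> bool) \<Rightarrow> 'a \<Rightarrow> 'a set set" where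
  "tsum_bases EL IL EM IM g =
     {B. B \<in> tsum_indeps EL IL EM IM g \<and>
         (\<forall>X \<in> tsum_indeps EL IL EM IM g. B \<subseteq> X \<longrightarrow> X = B)}"

definition tsum_spanning :: "'a set \<Rightarrow> ('a set \<Rightarrow> bool) \<Rightarrow> 'a set \<Rightarrow> ('a set \<Rightarrow> bool) \<Rightarrow> 'a \<Rightarrow> 'a set set" where
  "tsum_spanning EL IL EM IM g =
     {S. S \<subseteq> tsum_ground EL EM g \<and>
         tsum_rank EL IL EM IM g S = tsum_rank EL IL EM IM g (tsum_ground EL EM g)}"

definition Zgen :: "'a set set \<Rightarrow> ('a \<Rightarrow> real) \<Rightarrow> real" where
  "Zgen Q y = (\<Sum>S\<in>Q. \<Prod>e\<in>S. y e)"

text \<open>P^g = P with y_g := 0; P_g = partial derivative of P in y_g.\<close>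
definition set_zero :: "'a \<Rightarrow> (('a \<Rightarrow> real) \<Rightarrow> real) \<Rightarrow> ('a \<Rightarrow> real) \<Rightarrow> real" where
  "set_zero g P y = P (y(g := 0))"

definition partial :: "'a \<Rightarrow> (('a \<Rightarrow> real) \<Rightarrow> real) \<Rightarrow> ('a \<Rightarrow> real) \<Rightarrow> real" where
  "partial g P y = deriv (\<lambda>t. P (y(g := t))) (y g)"

end

theory Submission
  imports Defs
begin


lemma mr_fin:
  assumes "matroid E I"
  shows "finite {card Y | Y. Y \<subseteq> X \<and> I Y}" "{card Y | Y. Y \<subseteq> X \<and> I Y} \<noteq> {}"
proof -
  have "{card Y | Y. Y \<subseteq> X \<and> I Y} \<subseteq> card ` Pow E" using assms unfolding matroid_def by auto
  moreover have "finite (Pow E)" using assms unfolding matroid_def by auto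
  ultimately show "finite {card Y | Y. Y \<subseteq> X \<and> I Y}" by (meson finite_imageI finite_subset)
  show "{card Y | Y. Y \<subseteq> X \<and> I Y} \<noteq> {}" using assms unfolding matroid_def by auto
qed

lemma mrank_ge:
  assumes "matroid E I" "Y \<subseteq> X" "I Y"
  shows "card Y \<le> mrank I X"
  unfolding mrank_def using mr_fin[OF assms(1)] assms by (intro Max_ge) auto

lemma mrank_obtain:
  assumes "matroid E I"
  obtains Y where "Y \<subseteq> X" "I Y" "card Y = mrank I X"
proof -
  have "mrank I X \<in> {card Y | Y. Y \<subseteq> X \<and> I Y}"
    unfolding mrank_def using mr_fin[OF assms(1)] by (intro Max_in) auto
  then show ?thesis using that by auto
qed

lemma indep_sub: "matroid E I \<Longrightarrow> I Y \<Longrightarrow> Y \<subseteq> E"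
  unfolding matroid_def by auto

lemma indep_fin: "matroid E I \<Longrightarrow> I Y \<Longrightarrow> finite Y"
  unfolding matroid_def by (auto intro: finite_subset)

lemma indep_mono: "matroid E I \<Longrightarrow> I Y \<Longrightarrow> X \<subseteq> Y \<Longrightarrow> I X"
  unfolding matroid_def by blast

lemma mrank_mono:
  assumes "matroid E I" "X \<subseteq> X'"
  shows "mrank I X \<le> mrank I X'"
proof -
  obtain Y where "Y \<subseteq> X" "I Y" "card Y = mrank I X" using mrank_obtain[OF assms(1)] by blast
  then show ?thesis using mrank_ge[OF assms(1), of Y X'] assms(2) by auto
qed

lemma mrank_le_card:
  assumes "matroid E I" "finite X"
  shows "mrank I X \<le> card X"
proof -
  obtain Y where "Y \<subseteq> X" "I Y" "card Y = mrank I X" using mrank_obtain[OF assms(1)] by blast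
  then show ?thesis using card_mono[OF assms(2), of Y] by linarith
qed

lemma mrank_le_E:
  assumes "matroid E I"
  shows "mrank I X \<le> mrank I E"
proof -
  obtain Y where "Y \<subseteq> X" "I Y" "card Y = mrank I X" using mrank_obtain[OF assms(1)] by blast
  then show ?thesis using mrank_ge[OF assms(1), of Y E] indep_sub[OF assms(1)] by auto
qed

lemma mrank_indep:
  assumes "matroid E I" "I X"
  shows "mrank I X = card X"
  using mrank_ge[OF assms(1) order_refl assms(2)] mrank_le_card[OF assms(1) indep_fin[OF assms]] by auto

lemma mrank_card_indep:
  assumes "matroid E I" "finite X" "mrank I X = card X"
  shows "I X"
proof -
  obtain Y where "Y \<subseteq> X" "I Y" "card Y = mrank I X" using mrank_obtain[OF assms(1)] by blast
  then have "Y = X" using card_subset_eq[OF assms(2)] assms(3) by auto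
  then show ?thesis using \<open>I Y\<close> by simp
qed

lemma mrank_insert:
  assumes "matroid E I"
  shows "mrank I (insert e X) \<le> Suc (mrank I X)"
proof -
  obtain Y where Y: "Y \<subseteq> insert e X" "I Y" "card Y = mrank I (insert e X)"
    using mrank_obtain[OF assms(1)] by blast
  have "I (Y - {e})" using indep_mono[OF assms Y(2)] by auto
  moreover have "Y - {e} \<subseteq> X" using Y by auto
  ultimately have "card (Y - {e}) \<le> mrank I X" using mrank_ge[OF assms] by auto
  moreover have "card Y \<le> Suc (card (Y - {e}))"
    using indep_fin[OF assms Y(2)] by (metis card_Diff1_le card_Suc_Diff1 eq_imp_le le_SucI Diff_empty Diff_insert0)
  ultimately show ?thesis using Y by auto
qed

lemma mrank_extend:
  assumes "matroid E I" "I Y" "Y \<subseteq> X"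
  shows "\<exists>Z. Y \<subseteq> Z \<and> Z \<subseteq> X \<and> I Z \<and> card Z = mrank I X"
  using assms(2,3)
proof (induction "mrank I X - card Y" arbitrary: Y rule: less_induct)
  case less
  show ?case
  proof (cases "card Y < mrank I X")
    case False
    then show ?thesis using mrank_ge[OF assms(1) less(3) less(2)] less by (intro exI[of _ Y]) auto
  next
    case True
    obtain W where W: "W \<subseteq> X" "I W" "card W = mrank I X" using mrank_obtain[OF assms(1)] by blast
    then obtain e where e: "e \<in> W - Y" "I (insert e Y)" using assms(1) True less(2)
      unfolding matroid_def by metis
    have cY: "card (insert e Y) = Suc (card Y)" using e indep_fin[OF assms(1) less(2)] by auto
    have lt: "mrank I X - card (insert e Y) < mrank I X - card Y" using cY True by simp
    have sub: "insert e Y \<subseteq> X" using e W less(3) by auto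
    have "\<exists>Z. insert e Y \<subseteq> Z \<and> Z \<subseteq> X \<and> I Z \<and> card Z = mrank I X"
      using less(1)[OF lt e(2) sub] .
    then show ?thesis by blast
  qed
qed

lemma bases_char:
  assumes "matroid E I"
  shows "B \<in> bases E I \<longleftrightarrow> B \<subseteq> E \<and> I B \<and> card B = mrank I E"
proof
  assume B: "B \<in> bases E I"
  then have "B \<subseteq> E" "I B" unfolding bases_def by auto
  then obtain Z where Z: "B \<subseteq> Z" "Z \<subseteq> E" "I Z" "card Z = mrank I E"
    using mrank_extend[OF assms] by blast
  then have "Z = B" using B unfolding bases_def by auto
  then show "B \<subseteq> E \<and> I B \<and> card B = mrank I E" using Z by auto
next
  assume B: "B \<subseteq> E \<and> I B \<and> card B = mrank I E"
  { fix X assume X: "X \<subseteq> E" "I X" "B \<subseteq> X"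
    have "card X \<le> card B" using mrank_ge[OF assms X(1,2)] B by auto
    then have "X = B" using card_seteq[OF indep_fin[OF assms X(2)] X(3)] by simp }
  then show "B \<in> bases E I" using B unfolding bases_def by auto
qed



lemma Zgen_split:
  assumes "finite E" "Q \<subseteq> Pow E"
  shows "Zgen Q (y(g:=t)) = (\<Sum>S\<in>{S\<in>Q. g\<notin>S}. \<Prod>e\<in>S. y e) + t * (\<Sum>S\<in>{S\<in>Q. g\<in>S}. \<Prod>e\<in>S-{g}. y e)"
proof -
  have fQ: "finite Q" using assms by (meson finite_Pow_iff finite_subset)
  have Q: "Q = {S\<in>Q. g\<notin>S} \<union> {S\<in>Q. g\<in>S}" by auto
  have "Zgen Q (y(g:=t)) = (\<Sum>S\<in>{S\<in>Q. g\<notin>S}. \<Prod>e\<in>S. (y(g:=t)) e) + (\<Sum>S\<in>{S\<in>Q. g\<in>S}. \<Prod>e\<in>S. (y(g:=t)) e)"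
    unfolding Zgen_def by (subst Q, rule sum.union_disjoint) (use fQ in auto)
  also have "(\<Sum>S\<in>{S\<in>Q. g\<notin>S}. \<Prod>e\<in>S. (y(g:=t)) e) = (\<Sum>S\<in>{S\<in>Q. g\<notin>S}. \<Prod>e\<in>S. y e)"
    by (intro sum.cong refl prod.cong) auto
  also have "(\<Sum>S\<in>{S\<in>Q. g\<in>S}. \<Prod>e\<in>S. (y(g:=t)) e) = (\<Sum>S\<in>{S\<in>Q. g\<in>S}. t * (\<Prod>e\<in>S-{g}. y e))"
  proof (intro sum.cong refl)
    fix S assume S: "S \<in> {S\<in>Q. g\<in>S}"
    then have fS: "finite S" using assms by (auto intro: finite_subset)
    have "(\<Prod>e\<in>S. (y(g:=t)) e) = (y(g:=t)) g * (\<Prod>e\<in>S-{g}. (y(g:=t)) e)"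
      using prod.remove[OF fS] S by blast
    also have "(\<Prod>e\<in>S-{g}. (y(g:=t)) e) = (\<Prod>e\<in>S-{g}. y e)" by (intro prod.cong) auto
    finally show "(\<Prod>e\<in>S. (y(g:=t)) e) = t * (\<Prod>e\<in>S-{g}. y e)" by simp
  qed
  finally show ?thesis by (simp only: sum_distrib_left)
qed

lemma set_zero_Zgen:
  assumes "finite E" "Q \<subseteq> Pow E"
  shows "set_zero g (Zgen Q) y = (\<Sum>S\<in>{S\<in>Q. g\<notin>S}. \<Prod>e\<in>S. y e)"
  unfolding set_zero_def using Zgen_split[OF assms, of y g 0] by simp

lemma partial_Zgen:
  assumes "finite E" "Q \<subseteq> Pow E"
  shows "partial g (Zgen Q) y = (\<Sum>S\<in>{S\<in>Q. g\<in>S}. \<Prod>e\<in>S-{g}. y e)"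
proof -
  define a where "a = (\<Sum>S\<in>{S\<in>Q. g\<notin>S}. \<Prod>e\<in>S. y e)"
  define b where "b = (\<Sum>S\<in>{S\<in>Q. g\<in>S}. \<Prod>e\<in>S-{g}. y e)"
  have "(\<lambda>t. Zgen Q (y(g:=t))) = (\<lambda>t. a + t * b)"
    using Zgen_split[OF assms] unfolding a_def b_def by auto
  moreover have "((\<lambda>t. a + t * b) has_real_derivative b) (at (y g))"
    by (auto intro!: derivative_eq_intros)
  ultimately show ?thesis unfolding partial_def b_def by (simp add: DERIV_imp_deriv)
qed

lemma sum_nog:
  fixes w :: "'a set \<Rightarrow> real"
  assumes "finite E" "Q \<subseteq> Pow E"
  shows "(\<Sum>S\<in>{S\<in>Q. g\<notin>S}. w S) = (\<Sum>A\<in>Pow (E-{g}). (if A \<in> Q then 1 else 0) * w A)"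
proof -
  have "(\<Sum>A\<in>Pow (E-{g}). (if A \<in> Q then 1 else 0) * w A) = (\<Sum>A\<in>Pow (E-{g}). (if A \<in> Q then w A else 0))"
    by (intro sum.cong) auto
  also have "\<dots> = (\<Sum>A\<in>{A\<in>Pow (E-{g}). A \<in> Q}. w A)"
    by (rule sum.inter_filter[symmetric]) (use assms(1) in simp)
  also have "{A\<in>Pow (E-{g}). A \<in> Q} = {S\<in>Q. g\<notin>S}" using assms(2) by auto
  finally show ?thesis by simp
qed

lemma sum_g:
  fixes w :: "'a set \<Rightarrow> real"
  assumes "finite E" "Q \<subseteq> Pow E"
  shows "(\<Sum>S\<in>{S\<in>Q. g\<in>S}. w (S - {g})) = (\<Sum>A\<in>Pow (E-{g}). (if insert g A \<in> Q then 1 else 0) * w A)"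
proof -
  have "(\<Sum>A\<in>Pow (E-{g}). (if insert g A \<in> Q then 1 else 0) * w A) = (\<Sum>A\<in>Pow (E-{g}). (if insert g A \<in> Q then w A else 0))"
    by (intro sum.cong) auto
  also have "\<dots> = (\<Sum>A\<in>{A\<in>Pow (E-{g}). insert g A \<in> Q}. w A)"
    by (rule sum.inter_filter[symmetric]) (use assms(1) in simp)
  also have "\<dots> = (\<Sum>S\<in>{S\<in>Q. g\<in>S}. w (S - {g}))"
    by (rule sum.reindex_bij_witness[where i="\<lambda>S. S - {g}" and j="insert g"])
      (use assms(2) in \<open>auto simp: insert_absorb subset_Diff_insert\<close>)
  finally show ?thesis by simp
qed

lemma sum_pair:
  assumes "finite X" "finite Y" "X \<inter> Y = {}" "NQ \<subseteq> Pow (X \<union> Y)"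
  shows "(\<Sum>S\<in>NQ. \<Prod>e\<in>S. (y e::real)) =
    (\<Sum>A\<in>Pow X. \<Sum>B\<in>Pow Y. (if A \<union> B \<in> NQ then 1 else 0) * ((\<Prod>e\<in>A. y e) * (\<Prod>e\<in>B. y e)))"
proof -
  have "(\<Sum>A\<in>Pow X. \<Sum>B\<in>Pow Y. (if A \<union> B \<in> NQ then 1 else 0) * ((\<Prod>e\<in>A. y e) * (\<Prod>e\<in>B. y e)))
     = (\<Sum>p\<in>Pow X \<times> Pow Y. (if fst p \<union> snd p \<in> NQ then (\<Prod>e\<in>fst p. y e) * (\<Prod>e\<in>snd p. y e) else 0))"
    by (subst sum.cartesian_product) (intro sum.cong, auto)
  also have "\<dots> = (\<Sum>p\<in>{p\<in>Pow X \<times> Pow Y. fst p \<union> snd p \<in> NQ}. (\<Prod>e\<in>fst p. y e) * (\<Prod>e\<in>snd p. y e))"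
    using assms(1,2) by (simp add: sum.inter_filter)
  also have "\<dots> = (\<Sum>S\<in>NQ. \<Prod>e\<in>S. y e)"
  proof (rule sum.reindex_bij_witness[where i="\<lambda>S. (S \<inter> X, S \<inter> Y)" and j="\<lambda>p. fst p \<union> snd p"])
    fix p assume p: "p \<in> {p\<in>Pow X \<times> Pow Y. fst p \<union> snd p \<in> NQ}"
    then show "((fst p \<union> snd p) \<inter> X, (fst p \<union> snd p) \<inter> Y) = p" using assms(3) by auto
    show "fst p \<union> snd p \<in> NQ" using p by auto
    have "fst p \<subseteq> X" "snd p \<subseteq> Y" using p by auto
    then have "finite (fst p)" "finite (snd p)" using assms(1,2) by (auto intro: finite_subset)
    moreover have "fst p \<inter> snd p = {}" using \<open>fst p \<subseteq> X\<close> \<open>snd p \<subseteq> Y\<close> assms(3) by blast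
    ultimately show "(\<Prod>e\<in>fst p \<union> snd p. y e) = (\<Prod>e\<in>fst p. y e) * (\<Prod>e\<in>snd p. y e)"
      by (simp add: prod.union_disjoint)
  next
    fix S assume S: "S \<in> NQ"
    then show "fst (S \<inter> X, S \<inter> Y) \<union> snd (S \<inter> X, S \<inter> Y) = S" using assms(4) by auto
    have "S \<inter> X \<union> S \<inter> Y = S" using S assms(4) by auto
    then show "(S \<inter> X, S \<inter> Y) \<in> {p\<in>Pow X \<times> Pow Y. fst p \<union> snd p \<in> NQ}" using S by auto
  qed
  finally show ?thesis by simp
qed

lemma comb:
  fixes n :: "'x \<Rightarrow> 'y \<Rightarrow> real" and f1 f2 fz u :: "'x \<Rightarrow> real" and g1 g2 gz v :: "'y \<Rightarrow> real" 
  assumes "\<And>a b. a \<in> X \<Longrightarrow> b \<in> Y \<Longrightarrow> n a b = f1 a * g1 b + f2 a * g2 b - fz a * gz b"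
  shows "(\<Sum>a\<in>X. \<Sum>b\<in>Y. n a b * (u a * v b)) =
     (\<Sum>a\<in>X. f1 a * u a) * (\<Sum>b\<in>Y. g1 b * v b) + (\<Sum>a\<in>X. f2 a * u a) * (\<Sum>b\<in>Y. g2 b * v b)
     - (\<Sum>a\<in>X. fz a * u a) * (\<Sum>b\<in>Y. gz b * v b)"
proof -
  have "(\<Sum>a\<in>X. f1 a * u a) * (\<Sum>b\<in>Y. g1 b * v b) + (\<Sum>a\<in>X. f2 a * u a) * (\<Sum>b\<in>Y. g2 b * v b)
     - (\<Sum>a\<in>X. fz a * u a) * (\<Sum>b\<in>Y. gz b * v b) =
     (\<Sum>a\<in>X. \<Sum>b\<in>Y. f1 a * u a * (g1 b * v b) + f2 a * u a * (g2 b * v b) - fz a * u a * (gz b * v b))"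
    by (simp add: sum_product sum.distrib sum_subtractf)
  also have "\<dots> = (\<Sum>a\<in>X. \<Sum>b\<in>Y. n a b * (u a * v b))"
    by (intro sum.cong refl) (simp add: assms algebra_simps)
  finally show ?thesis by simp
qed



lemma arith_span:
  fixes x x' y y' rL rM :: nat
  assumes "x \<le> x'" "x' \<le> Suc x" "x' \<le> rL" "1 \<le> x'" "y \<le> y'" "y' \<le> Suc y" "y' \<le> rM" "1 \<le> y'"
  shows "(x + y - (if x' = x \<and> y' = y then 1 else 0) = rL + rM - 1) \<longleftrightarrow> (x = rL \<and> y' = rM) \<or> (x' = rL \<and> y = rM)"
  using assms by (cases "x' = x \<and> y' = y") auto
lemma arith_ind:
  fixes x x' y y' cA cB :: nat
  assumes "x \<le> x'" "x' \<le> Suc x" "1 \<le> x'" "y \<le> y'" "y' \<le> Suc y" "1 \<le> y'" "x \<le> cA" "y \<le> cB"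
  shows "(x + y - (if x' = x \<and> y' = y then 1 else 0) = cA + cB) \<longleftrightarrow> x = cA \<and> y = cB \<and> (x' = Suc cA \<or> y' = Suc cB)"
  using assms by (cases "x' = x \<and> y' = y") auto

lemma side_facts:
  assumes m: "matroid E I" and gE: "g \<in> E" and Ig: "I {g}" and A: "A \<subseteq> E - {g}"
  shows "mrank I A \<le> mrank I (insert g A)" "mrank I (insert g A) \<le> Suc (mrank I A)"
    "mrank I (insert g A) \<le> mrank I E" "1 \<le> mrank I (insert g A)" "mrank I A \<le> card A"
    "I A \<longleftrightarrow> mrank I A = card A" "I (insert g A) \<longleftrightarrow> mrank I (insert g A) = Suc (card A)"
    "g \<in> mclosure E I A \<longleftrightarrow> mrank I (insert g A) = mrank I A"
    "A \<in> indeps E I \<longleftrightarrow> mrank I A = card A"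
    "insert g A \<in> indeps E I \<longleftrightarrow> mrank I (insert g A) = Suc (card A)"
    "A \<in> bases E I \<longleftrightarrow> mrank I A = card A \<and> card A = mrank I E"
    "insert g A \<in> bases E I \<longleftrightarrow> mrank I (insert g A) = Suc (card A) \<and> Suc (card A) = mrank I E"
    "A \<in> spanning E I \<longleftrightarrow> mrank I A = mrank I E"
    "insert g A \<in> spanning E I \<longleftrightarrow> mrank I (insert g A) = mrank I E"
proof -
  have fE: "finite E" using m unfolding matroid_def by auto
  have fA: "finite A" using A fE by (auto intro: finite_subset)
  have gA: "g \<notin> A" using A by auto
  have cg: "card (insert g A) = Suc (card A)" using fA gA by simp
  show "mrank I A \<le> mrank I (insert g A)" using mrank_mono[OF m, of A "insert g A"] by auto
  show "mrank I (insert g A) \<le> Suc (mrank I A)" using mrank_insert[OF m] by auto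
  show "mrank I (insert g A) \<le> mrank I E" using mrank_le_E[OF m] by auto
  show "1 \<le> mrank I (insert g A)" using mrank_ge[OF m _ Ig, of "insert g A"] by auto
  show "mrank I A \<le> card A" using mrank_le_card[OF m fA] .
  show iA: "I A \<longleftrightarrow> mrank I A = card A" using mrank_indep[OF m] mrank_card_indep[OF m fA] by auto
  show igA: "I (insert g A) \<longleftrightarrow> mrank I (insert g A) = Suc (card A)"
    using mrank_indep[OF m, of "insert g A"] mrank_card_indep[OF m, of "insert g A"] fA cg by auto
  show "g \<in> mclosure E I A \<longleftrightarrow> mrank I (insert g A) = mrank I A"
    unfolding mclosure_def using gE by auto
  show "A \<in> indeps E I \<longleftrightarrow> mrank I A = card A" unfolding indeps_def using iA A by auto
  show "insert g A \<in> indeps E I \<longleftrightarrow> mrank I (insert g A) = Suc (card A)"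
    unfolding indeps_def using igA A gE by auto
  show "A \<in> bases E I \<longleftrightarrow> mrank I A = card A \<and> card A = mrank I E"
    using bases_char[OF m] iA A by auto
  show "insert g A \<in> bases E I \<longleftrightarrow> mrank I (insert g A) = Suc (card A) \<and> Suc (card A) = mrank I E"
    using bases_char[OF m] igA A gE cg by auto
  show "A \<in> spanning E I \<longleftrightarrow> mrank I A = mrank I E" unfolding spanning_def using A by auto
  show "insert g A \<in> spanning E I \<longleftrightarrow> mrank I (insert g A) = mrank I E"
    unfolding spanning_def using A gE by auto
qed

lemma ext0:
  assumes m: "matroid E I" and r: "mrank I (E - {g}) = mrank I E" and A: "A \<subseteq> E - {g}" "I A"
  shows "\<exists>A'. A \<subseteq> A' \<and> A' \<subseteq> E - {g} \<and> I A' \<and> card A' = mrank I E"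
  using mrank_extend[OF m A(2) A(1)] r by auto

lemma ext1:
  assumes m: "matroid E I" and gE: "g \<in> E" and A: "A \<subseteq> E - {g}" "I (insert g A)"
  shows "\<exists>A'. A \<subseteq> A' \<and> A' \<subseteq> E - {g} \<and> I (insert g A') \<and> Suc (card A') = mrank I E"
proof -
  have sub: "insert g A \<subseteq> E" using A(1) gE by auto
  obtain Z where Z: "insert g A \<subseteq> Z" "Z \<subseteq> E" "I Z" "card Z = mrank I E"
    using mrank_extend[OF m A(2) sub] by blast
  have fZ: "finite Z" using indep_fin[OF m Z(3)] .
  have "insert g (Z - {g}) = Z" using Z(1) by auto
  moreover have "Suc (card (Z - {g})) = card Z" using fZ Z(1) card_Suc_Diff1[OF fZ, of g] by simp
  ultimately show ?thesis using Z A by (intro exI[of _ "Z - {g}"]) auto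
qed

lemma noncoloop_rank:
  assumes m: "matroid E I" and nc: "\<not> is_coloop E I g"
  shows "mrank I (E - {g}) = mrank I E"
proof -
  obtain B where B: "B \<in> bases E I" "g \<notin> B" using nc unfolding is_coloop_def by auto
  then have "B \<subseteq> E - {g}" "I B" "card B = mrank I E" using bases_char[OF m] by auto
  then have "mrank I E \<le> mrank I (E - {g})" using mrank_ge[OF m] by metis
  moreover have "mrank I (E - {g}) \<le> mrank I E" using mrank_mono[OF m, of "E - {g}" E] by auto
  ultimately show ?thesis by simp
qed

locale ts =
  fixes EL :: "'a set" and IL and EM :: "'a set" and IM and g :: 'a
  assumes mL: "matroid EL IL" and mM: "matroid EM IM"
    and int: "EL \<inter> EM = {g}"
    and nlL: "\<not> is_loop IL g" and ncL: "\<not> is_coloop EL IL g"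
    and nlM: "\<not> is_loop IM g" and ncM: "\<not> is_coloop EM IM g"
begin

lemma gL: "g \<in> EL" and gM: "g \<in> EM" using int by auto
lemma IgL: "IL {g}" using nlL unfolding is_loop_def by auto
lemma IgM: "IM {g}" using nlM unfolding is_loop_def by auto
lemma rkL: "mrank IL (EL - {g}) = mrank IL EL" using noncoloop_rank[OF mL ncL] .
lemma rkM: "mrank IM (EM - {g}) = mrank IM EM" using noncoloop_rank[OF mM ncM] .
lemma fL: "finite EL" using mL unfolding matroid_def by auto
lemma fM: "finite EM" using mM unfolding matroid_def by auto

lemmas sL = side_facts[OF mL gL IgL]
lemmas sM = side_facts[OF mM gM IgM]

lemma ground: "tsum_ground EL EM g = (EL - {g}) \<union> (EM - {g})"
  unfolding tsum_ground_def by auto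

lemma pair_int:
  assumes "A \<subseteq> EL - {g}" "B \<subseteq> EM - {g}"
  shows "(A \<union> B) \<inter> EL = A" "(A \<union> B) \<inter> EM = B"
  using assms int by auto

lemma trank_pair:
  assumes A: "A \<subseteq> EL - {g}" and B: "B \<subseteq> EM - {g}"
  shows "tsum_rank EL IL EM IM g (A \<union> B) = mrank IL A + mrank IM B -
     (if mrank IL (insert g A) = mrank IL A \<and> mrank IM (insert g B) = mrank IM B then 1 else 0)"
  unfolding tsum_rank_def tsum_nu_def pair_int[OF A B] using sL(8)[OF A] sM(8)[OF B] by simp

lemma trank_ground: "tsum_rank EL IL EM IM g (tsum_ground EL EM g) = mrank IL EL + mrank IM EM - 1"
proof -
  have e1: "insert g (EL - {g}) = EL" "insert g (EM - {g}) = EM" using gL gM by auto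
  show ?thesis unfolding ground using trank_pair[of "EL - {g}" "EM - {g}"] e1 rkL rkM by simp
qed

lemma card_pair:
  assumes A: "A \<subseteq> EL - {g}" and B: "B \<subseteq> EM - {g}"
  shows "card (A \<union> B) = card A + card B"
proof -
  have "finite A" "finite B" using A B fL fM by (auto intro: finite_subset)
  moreover have "A \<inter> B = {}" using A B int by auto
  ultimately show ?thesis by (simp add: card_Un_disjoint)
qed

lemma ind_pair:
  assumes A: "A \<subseteq> EL - {g}" and B: "B \<subseteq> EM - {g}"
  shows "A \<union> B \<in> tsum_indeps EL IL EM IM g \<longleftrightarrow>
    mrank IL A = card A \<and> mrank IM B = card B \<and>
    (mrank IL (insert g A) = Suc (card A) \<or> mrank IM (insert g B) = Suc (card B))"
proof -
  have "A \<union> B \<subseteq> tsum_ground EL EM g" using A B ground by auto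
  then have "A \<union> B \<in> tsum_indeps EL IL EM IM g \<longleftrightarrow> tsum_rank EL IL EM IM g (A \<union> B) = card A + card B"
    unfolding tsum_indeps_def using card_pair[OF A B] by auto
  also have "\<dots> \<longleftrightarrow> mrank IL A = card A \<and> mrank IM B = card B \<and>
    (mrank IL (insert g A) = Suc (card A) \<or> mrank IM (insert g B) = Suc (card B))"
    unfolding trank_pair[OF A B]
    by (rule arith_ind) (use sL(1-5)[OF A] sM(1-5)[OF B] in auto)
  finally show ?thesis .
qed

lemma span_pair:
  assumes A: "A \<subseteq> EL - {g}" and B: "B \<subseteq> EM - {g}"
  shows "A \<union> B \<in> tsum_spanning EL IL EM IM g \<longleftrightarrow>
    (mrank IL A = mrank IL EL \<and> mrank IM (insert g B) = mrank IM EM) \<or>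
    (mrank IL (insert g A) = mrank IL EL \<and> mrank IM B = mrank IM EM)"
proof -
  have "A \<union> B \<subseteq> tsum_ground EL EM g" using A B ground by auto
  then have "A \<union> B \<in> tsum_spanning EL IL EM IM g \<longleftrightarrow> tsum_rank EL IL EM IM g (A \<union> B) = mrank IL EL + mrank IM EM - 1"
    unfolding tsum_spanning_def trank_ground by auto
  also have "\<dots> \<longleftrightarrow> (mrank IL A = mrank IL EL \<and> mrank IM (insert g B) = mrank IM EM) \<or>
    (mrank IL (insert g A) = mrank IL EL \<and> mrank IM B = mrank IM EM)"
    unfolding trank_pair[OF A B]
    by (rule arith_span) (use sL(1-5)[OF A] sM(1-5)[OF B] in auto)
  finally show ?thesis .
qed

end



lemma LZ0:
  assumes "finite E" "Q \<subseteq> Pow E"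
  shows "set_zero g (Zgen Q) y = (\<Sum>A\<in>Pow (E-{g}). (if A \<in> Q then 1 else 0) * prod y A)"
  using set_zero_Zgen[OF assms] sum_nog[OF assms, where w="prod y" and g=g] by simp

lemma LZ1:
  assumes "finite E" "Q \<subseteq> Pow E"
  shows "partial g (Zgen Q) y = (\<Sum>A\<in>Pow (E-{g}). (if insert g A \<in> Q then 1 else 0) * prod y A)"
  using partial_Zgen[OF assms] sum_g[OF assms, where w="prod y" and g=g] by simp

lemma famP: "indeps E I \<subseteq> Pow E" "bases E I \<subseteq> Pow E" "spanning E I \<subseteq> Pow E"
  unfolding indeps_def bases_def spanning_def by auto

context ts begin

lemma famN: "tsum_indeps EL IL EM IM g \<subseteq> Pow ((EL - {g}) \<union> (EM - {g}))"
  "tsum_bases EL IL EM IM g \<subseteq> Pow ((EL - {g}) \<union> (EM - {g}))"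
  "tsum_spanning EL IL EM IM g \<subseteq> Pow ((EL - {g}) \<union> (EM - {g}))"
  unfolding tsum_indeps_def tsum_bases_def tsum_spanning_def ground by auto

lemma NZ:
  assumes "NQ \<subseteq> Pow ((EL - {g}) \<union> (EM - {g}))"
  shows "Zgen NQ y = (\<Sum>A\<in>Pow (EL-{g}). \<Sum>B\<in>Pow (EM-{g}). (if A \<union> B \<in> NQ then 1 else 0) * (prod y A * prod y B))"
  unfolding Zgen_def by (rule sum_pair) (use fL fM int assms in auto)

lemma decomp:
  assumes "S \<subseteq> tsum_ground EL EM g"
  shows "S = (S \<inter> EL) \<union> (S \<inter> EM)" "S \<inter> EL \<subseteq> EL - {g}" "S \<inter> EM \<subseteq> EM - {g}"
  using assms unfolding ground by auto

lemma Nind_card: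
  assumes S: "S \<in> tsum_indeps EL IL EM IM g"
  shows "card S \<le> mrank IL EL + mrank IM EM - 1"
proof -
  have Sg: "S \<subseteq> tsum_ground EL EM g" using S unfolding tsum_indeps_def by auto
  define A where "A = S \<inter> EL"
  define B where "B = S \<inter> EM"
  have A: "A \<subseteq> EL - {g}" and B: "B \<subseteq> EM - {g}" and SAB: "S = A \<union> B"
    using decomp[OF Sg] unfolding A_def B_def by auto
  have "mrank IL A = card A \<and> mrank IM B = card B \<and>
    (mrank IL (insert g A) = Suc (card A) \<or> mrank IM (insert g B) = Suc (card B))"
    using ind_pair[OF A B] S SAB by simp
  moreover note sL(1-5)[OF A] sM(1-5)[OF B]
  ultimately show ?thesis using card_pair[OF A B] SAB by auto
qed

lemma Nind_ext:
  assumes S: "S \<in> tsum_indeps EL IL EM IM g"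
  shows "\<exists>T\<in>tsum_indeps EL IL EM IM g. S \<subseteq> T \<and> card T = mrank IL EL + mrank IM EM - 1"
proof -
  have Sg: "S \<subseteq> tsum_ground EL EM g" using S unfolding tsum_indeps_def by auto
  define A where "A = S \<inter> EL"
  define B where "B = S \<inter> EM"
  have A: "A \<subseteq> EL - {g}" and B: "B \<subseteq> EM - {g}" and SAB: "S = A \<union> B"
    using decomp[OF Sg] unfolding A_def B_def by auto
  have c: "mrank IL A = card A" "mrank IM B = card B"
    "mrank IL (insert g A) = Suc (card A) \<or> mrank IM (insert g B) = Suc (card B)"
    using ind_pair[OF A B] S SAB by simp_all
  have IA: "IL A" and IB: "IM B" using sL(6)[OF A] sM(6)[OF B] c by auto
  show ?thesis
  proof (cases "mrank IL (insert g A) = Suc (card A)")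
    case True
    then have "IL (insert g A)" using sL(7)[OF A] by simp
    then obtain A' where A': "A \<subseteq> A'" "A' \<subseteq> EL - {g}" "IL (insert g A')" "Suc (card A') = mrank IL EL"
      using ext1[OF mL gL A] by blast
    obtain B' where B': "B \<subseteq> B'" "B' \<subseteq> EM - {g}" "IM B'" "card B' = mrank IM EM"
      using ext0[OF mM rkM B IB] by blast
    have "IL A'" using indep_mono[OF mL A'(3)] by auto
    then have "A' \<union> B' \<in> tsum_indeps EL IL EM IM g"
      unfolding ind_pair[OF A'(2) B'(2)] using sL(6,7)[OF A'(2)] sM(6)[OF B'(2)] A'(3) B'(3) by simp
    moreover have "card (A' \<union> B') = mrank IL EL + mrank IM EM - 1"
      using card_pair[OF A'(2) B'(2)] A'(4) B'(4) by simp
    ultimately show ?thesis using SAB A'(1) B'(1) by blast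
  next
    case False
    then have "mrank IM (insert g B) = Suc (card B)" using c by simp
    then have "IM (insert g B)" using sM(7)[OF B] by simp
    then obtain B' where B': "B \<subseteq> B'" "B' \<subseteq> EM - {g}" "IM (insert g B')" "Suc (card B') = mrank IM EM"
      using ext1[OF mM gM B] by blast
    obtain A' where A': "A \<subseteq> A'" "A' \<subseteq> EL - {g}" "IL A'" "card A' = mrank IL EL"
      using ext0[OF mL rkL A IA] by blast
    have "IM B'" using indep_mono[OF mM B'(3)] by auto
    then have "A' \<union> B' \<in> tsum_indeps EL IL EM IM g"
      unfolding ind_pair[OF A'(2) B'(2)] using sM(6,7)[OF B'(2)] sL(6)[OF A'(2)] A'(3) B'(3) by simp
    moreover have "card (A' \<union> B') = mrank IL EL + mrank IM EM - 1"
      using card_pair[OF A'(2) B'(2)] A'(4) B'(4) by simp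
    ultimately show ?thesis using SAB A'(1) B'(1) by blast
  qed
qed

lemma bases_N:
  "S \<in> tsum_bases EL IL EM IM g \<longleftrightarrow> S \<in> tsum_indeps EL IL EM IM g \<and> card S = mrank IL EL + mrank IM EM - 1"
proof
  assume S: "S \<in> tsum_bases EL IL EM IM g"
  then have Si: "S \<in> tsum_indeps EL IL EM IM g" unfolding tsum_bases_def by auto
  then obtain T where T: "T \<in> tsum_indeps EL IL EM IM g" "S \<subseteq> T" "card T = mrank IL EL + mrank IM EM - 1"
    using Nind_ext by blast
  then have "T = S" using S unfolding tsum_bases_def by auto
  then show "S \<in> tsum_indeps EL IL EM IM g \<and> card S = mrank IL EL + mrank IM EM - 1" using Si T by simp
next
  assume S: "S \<in> tsum_indeps EL IL EM IM g \<and> card S = mrank IL EL + mrank IM EM - 1"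
  have "X = S" if X: "X \<in> tsum_indeps EL IL EM IM g" "S \<subseteq> X" for X
  proof -
    have "X \<subseteq> tsum_ground EL EM g" using X unfolding tsum_indeps_def by auto
    then have fX: "finite X" using fL fM unfolding ground by (auto intro: finite_subset)
    have "card X \<le> card S" using Nind_card[OF X(1)] S by simp
    then show "X = S" using card_seteq[OF fX X(2)] by simp
  qed
  then show "S \<in> tsum_bases EL IL EM IM g" using S unfolding tsum_bases_def by auto
qed

lemma pw_ind:
  assumes A: "A \<subseteq> EL - {g}" and B: "B \<subseteq> EM - {g}"
  shows "(if A \<union> B \<in> tsum_indeps EL IL EM IM g then 1 else 0 :: real) =
    (if A \<in> indeps EL IL then 1 else 0) * (if insert g B \<in> indeps EM IM then 1 else 0)
  + (if insert g A \<in> indeps EL IL then 1 else 0) * (if B \<in> indeps EM IM then 1 else 0)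
  - (if insert g A \<in> indeps EL IL then 1 else 0) * (if insert g B \<in> indeps EM IM then 1 else 0)"
proof -
  have e: "A \<union> B \<in> tsum_indeps EL IL EM IM g \<longleftrightarrow>
    (A \<in> indeps EL IL \<and> insert g B \<in> indeps EM IM) \<or> (insert g A \<in> indeps EL IL \<and> B \<in> indeps EM IM)"
    unfolding ind_pair[OF A B] sL(9,10)[OF A] sM(9,10)[OF B]
    using sL(1-5)[OF A] sM(1-5)[OF B] by auto
  have i1: "insert g A \<in> indeps EL IL \<Longrightarrow> A \<in> indeps EL IL"
    unfolding sL(9,10)[OF A] using sL(1-5)[OF A] by auto
  have i2: "insert g B \<in> indeps EM IM \<Longrightarrow> B \<in> indeps EM IM"
    unfolding sM(9,10)[OF B] using sM(1-5)[OF B] by auto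
  show ?thesis using e i1 i2 by (cases "A \<in> indeps EL IL"; cases "B \<in> indeps EM IM";
    cases "insert g A \<in> indeps EL IL"; cases "insert g B \<in> indeps EM IM") auto
qed

lemma pw_span:
  assumes A: "A \<subseteq> EL - {g}" and B: "B \<subseteq> EM - {g}"
  shows "(if A \<union> B \<in> tsum_spanning EL IL EM IM g then 1 else 0 :: real) =
    (if A \<in> spanning EL IL then 1 else 0) * (if insert g B \<in> spanning EM IM then 1 else 0)
  + (if insert g A \<in> spanning EL IL then 1 else 0) * (if B \<in> spanning EM IM then 1 else 0)
  - (if A \<in> spanning EL IL then 1 else 0) * (if B \<in> spanning EM IM then 1 else 0)"
proof -
  have e: "A \<union> B \<in> tsum_spanning EL IL EM IM g \<longleftrightarrow>
    (A \<in> spanning EL IL \<and> insert g B \<in> spanning EM IM) \<or> (insert g A \<in> spanning EL IL \<and> B \<in> spanning EM IM)"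
    unfolding span_pair[OF A B] sL(13,14)[OF A] sM(13,14)[OF B] by simp
  have i1: "A \<in> spanning EL IL \<Longrightarrow> insert g A \<in> spanning EL IL"
    unfolding sL(13,14)[OF A] using sL(1-5)[OF A] by auto
  have i2: "B \<in> spanning EM IM \<Longrightarrow> insert g B \<in> spanning EM IM"
    unfolding sM(13,14)[OF B] using sM(1-5)[OF B] by auto
  show ?thesis using e i1 i2 by (cases "A \<in> spanning EL IL"; cases "B \<in> spanning EM IM";
    cases "insert g A \<in> spanning EL IL"; cases "insert g B \<in> spanning EM IM") auto
qed

lemma pw_bases:
  assumes A: "A \<subseteq> EL - {g}" and B: "B \<subseteq> EM - {g}"
  shows "(if A \<union> B \<in> tsum_bases EL IL EM IM g then 1 else 0 :: real) =
    (if A \<in> bases EL IL then 1 else 0) * (if insert g B \<in> bases EM IM then 1 else 0)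
  + (if insert g A \<in> bases EL IL then 1 else 0) * (if B \<in> bases EM IM then 1 else 0)
  - (\<lambda>_. 0) A * (\<lambda>_. 0) B"
proof -
  have e: "A \<union> B \<in> tsum_bases EL IL EM IM g \<longleftrightarrow>
    (A \<in> bases EL IL \<and> insert g B \<in> bases EM IM) \<or> (insert g A \<in> bases EL IL \<and> B \<in> bases EM IM)"
    unfolding bases_N ind_pair[OF A B] card_pair[OF A B] sL(11,12)[OF A] sM(11,12)[OF B]
    using sL(1-5)[OF A] sM(1-5)[OF B] by auto
  have x: "\<not> (A \<in> bases EL IL \<and> insert g A \<in> bases EL IL)"
    unfolding sL(11,12)[OF A] by auto
  show ?thesis using e x by (cases "A \<in> bases EL IL"; cases "B \<in> bases EM IM";
    cases "insert g A \<in> bases EL IL"; cases "insert g B \<in> bases EM IM") auto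
qed

end


theorem corollary5p7:
  fixes EL EM :: "'a set" and IL IM :: "'a set \<Rightarrow> bool" and g :: 'a
  assumes "matroid EL IL" and "matroid EM IM"
    and "EL \<inter> EM = {g}"
    and "\<not> is_loop IL g" and "\<not> is_coloop EL IL g"
    and "\<not> is_loop IM g" and "\<not> is_coloop EM IM g"
  shows
    "(let N = Zgen (tsum_bases EL IL EM IM g); L = Zgen (bases EL IL); M = Zgen (bases EM IM)
      in \<forall>y. N y = set_zero g L y * partial g M y + partial g L y * set_zero g M y)
   \<and> (let N = Zgen (tsum_indeps EL IL EM IM g); L = Zgen (indeps EL IL); M = Zgen (indeps EM IM)
      in \<forall>y. N y = set_zero g L y * partial g M y + partial g L y * set_zero g M y
                   - partial g L y * partial g M y)
   \<and> (let N = Zgen (tsum_spanning EL IL EM IM g); L = Zgen (spanning EL IL); M = Zgen (spanning EM IM)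
      in \<forall>y. N y = set_zero g L y * partial g M y + partial g L y * set_zero g M y
                   - set_zero g L y * set_zero g M y)"
proof -
  interpret ts EL IL EM IM g by (rule ts.intro) (rule assms)+
  have a: "\<forall>y. Zgen (tsum_bases EL IL EM IM g) y = set_zero g (Zgen (bases EL IL)) y * partial g (Zgen (bases EM IM)) y
     + partial g (Zgen (bases EL IL)) y * set_zero g (Zgen (bases EM IM)) y"
  proof
    fix y
    have "Zgen (tsum_bases EL IL EM IM g) y = set_zero g (Zgen (bases EL IL)) y * partial g (Zgen (bases EM IM)) y
     + partial g (Zgen (bases EL IL)) y * set_zero g (Zgen (bases EM IM)) y
     - (\<Sum>a\<in>Pow (EL - {g}). (\<lambda>_. 0) a * prod y a) * (\<Sum>b\<in>Pow (EM - {g}). (\<lambda>_. 0) b * prod y b)"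
      unfolding NZ[OF famN(2)] LZ0[OF fL famP(2)] LZ1[OF fL famP(2)] LZ0[OF fM famP(2)] LZ1[OF fM famP(2)]
      apply (rule comb[where fz="\<lambda>_. 0" and gz="\<lambda>_. 0"])
      apply (rule pw_bases)
      apply auto
      done
    then show "Zgen (tsum_bases EL IL EM IM g) y = set_zero g (Zgen (bases EL IL)) y * partial g (Zgen (bases EM IM)) y
     + partial g (Zgen (bases EL IL)) y * set_zero g (Zgen (bases EM IM)) y" by simp
  qed
  have b: "\<forall>y. Zgen (tsum_indeps EL IL EM IM g) y = set_zero g (Zgen (indeps EL IL)) y * partial g (Zgen (indeps EM IM)) y
     + partial g (Zgen (indeps EL IL)) y * set_zero g (Zgen (indeps EM IM)) y
     - partial g (Zgen (indeps EL IL)) y * partial g (Zgen (indeps EM IM)) y"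
  proof
    fix y
    show "Zgen (tsum_indeps EL IL EM IM g) y = set_zero g (Zgen (indeps EL IL)) y * partial g (Zgen (indeps EM IM)) y
     + partial g (Zgen (indeps EL IL)) y * set_zero g (Zgen (indeps EM IM)) y
     - partial g (Zgen (indeps EL IL)) y * partial g (Zgen (indeps EM IM)) y"
      unfolding NZ[OF famN(1)] LZ0[OF fL famP(1)] LZ1[OF fL famP(1)] LZ0[OF fM famP(1)] LZ1[OF fM famP(1)]
      apply (rule comb)
      apply (rule pw_ind)
      apply auto
      done
  qed
  have c: "\<forall>y. Zgen (tsum_spanning EL IL EM IM g) y = set_zero g (Zgen (spanning EL IL)) y * partial g (Zgen (spanning EM IM)) y
     + partial g (Zgen (spanning EL IL)) y * set_zero g (Zgen (spanning EM IM)) y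
     - set_zero g (Zgen (spanning EL IL)) y * set_zero g (Zgen (spanning EM IM)) y"
  proof
    fix y
    show "Zgen (tsum_spanning EL IL EM IM g) y = set_zero g (Zgen (spanning EL IL)) y * partial g (Zgen (spanning EM IM)) y
     + partial g (Zgen (spanning EL IL)) y * set_zero g (Zgen (spanning EM IM)) y
     - set_zero g (Zgen (spanning EL IL)) y * set_zero g (Zgen (spanning EM IM)) y"
      unfolding NZ[OF famN(3)] LZ0[OF fL famP(3)] LZ1[OF fL famP(3)] LZ0[OF fM famP(3)] LZ1[OF fM famP(3)]
      apply (rule comb)
      apply (rule pw_span)
      apply auto
      done
  qed
  show ?thesis unfolding Let_def using a b c by blast
qed

end
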